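(* Under the standing setup, the difference in group means satisfies $$D=\frac{\delta_B+\delta_W}{(1-\gamma)\,\mathrm{Var}(X)} .$$ (In particular $0\le\gamma<1$, and $D$ has the same sign as $\delta_B+\delta_W$.)
   Context: Let $(X,Y,N)$ be a random triple with $X\in\{0,1\}$ (group membership), $Y$ a real-valued outcome, and $N$ taking values in a finite set $\mathcal N$ (neighborhoods). Write $p_n=\Pr(N=n)$, $X_n=\mathbb E[X\mid N=n]$, $Y_n=\mathbb E[Y\mid N=n]$, and let $X_N=\mathbb E[X\mid N]$, $Y_N=\mathbb E[Y\mid N]$ denote the corresponding random variables. Assume there exists $n\in\mathcal N$ with $p_n>0$ and $X_n\in(0,1)$. Fix reals $\underline Y\le\overline Y$ and assume $Y_n^x:=\mathbb E[Y\mid X=x,N=n]\in[\underline Y,\overline Y]$ whenever $\Pr(X=x,N=n)>0$. Group means: $Y^x=\mathbb E[Y\mid X=x]$ for $x\in\{0,1\}$, and $D=Y^1-Y^0$. Between-group association: $\delta_B=\mathbb E[\mathrm{Cov}(Y,X\mid N)]$. Within-group association: $\delta_W=\mathbb E[\mathrm{Cov}(Y,X_N\mid X)]$. Aggregation ratio: $\gamma=\mathrm{Var}(X_N)/\mathrm{Var}(X)$. *)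

theory Defs
  imports "HOL-Probability.Probability"
begin

text \<open>Elementary conditional mean of f on an event A: E[f | A] = E[f 1_A] / P(A)
  (equal to 0 when P(A) = 0; such values are always multiplied by P(A) or excluded).\<close>
definition cmean :: "'a measure \<Rightarrow> ('a \<Rightarrow> real) \<Rightarrow> 'a set \<Rightarrow> real" where
  "cmean M f A = (\<integral>\<omega>. indicator A \<omega> * f \<omega> \<partial>M) / measure M A"

definition var :: "'a measure \<Rightarrow> ('a \<Rightarrow> real) \<Rightarrow> real" where
  "var M f = (\<integral>\<omega>. (f \<omega> - (\<integral>\<eta>. f \<eta> \<partial>M))\<^sup>2 \<partial>M)"

definition evN :: "'a measure \<Rightarrow> ('a \<Rightarrow> 'n) \<Rightarrow> 'n \<Rightarrow> 'a set" where
  "evN M N n = N -` {n} \<inter> space M"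

definition evX :: "'a measure \<Rightarrow> ('a \<Rightarrow> real) \<Rightarrow> real \<Rightarrow> 'a set" where
  "evX M X x = X -` {x} \<inter> space M"

definition XN :: "'a measure \<Rightarrow> ('a \<Rightarrow> real) \<Rightarrow> ('a \<Rightarrow> 'n) \<Rightarrow> 'a \<Rightarrow> real" where
  "XN M X N \<omega> = cmean M X (evN M N (N \<omega>))"

definition deltaB :: "'a measure \<Rightarrow> ('a \<Rightarrow> real) \<Rightarrow> ('a \<Rightarrow> real) \<Rightarrow> ('a \<Rightarrow> 'n::finite) \<Rightarrow> real" where
  "deltaB M X Y N = (\<Sum>n\<in>UNIV. measure M (evN M N n) *
     (cmean M (\<lambda>\<omega>. Y \<omega> * X \<omega>) (evN M N n) - cmean M Y (evN M N n) * cmean M X (evN M N n)))"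

definition deltaW :: "'a measure \<Rightarrow> ('a \<Rightarrow> real) \<Rightarrow> ('a \<Rightarrow> real) \<Rightarrow> ('a \<Rightarrow> 'n::finite) \<Rightarrow> real" where
  "deltaW M X Y N = (\<Sum>x\<in>{0,1}. measure M (evX M X x) *
     (cmean M (\<lambda>\<omega>. Y \<omega> * XN M X N \<omega>) (evX M X x)
      - cmean M Y (evX M X x) * cmean M (XN M X N) (evX M X x)))"

definition gammaAgg :: "'a measure \<Rightarrow> ('a \<Rightarrow> real) \<Rightarrow> ('a \<Rightarrow> 'n) \<Rightarrow> real" where
  "gammaAgg M X N = var M (XN M X N) / var M X"

definition Dgap :: "'a measure \<Rightarrow> ('a \<Rightarrow> real) \<Rightarrow> ('a \<Rightarrow> real) \<Rightarrow> real" where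
  "Dgap M X Y = cmean M Y (evX M X 1) - cmean M Y (evX M X 0)"

end

theory Submission
  imports Defs
begin

lemma L1:
  assumes P: "prob_space M" and A: "A \<in> sets M" and f: "integrable M f"
  shows "measure M A * cmean M f A = (\<integral>\<omega>. indicator A \<omega> * f \<omega> \<partial>M)"
proof (cases "measure M A = 0")
  case True
  interpret prob_space M by fact
  have "A \<in> null_sets M"
    using A True emeasure_eq_measure by (simp add: null_sets_def)
  then have ae: "AE \<omega> in M. indicator A \<omega> * f \<omega> = (0::real)"
    by (rule AE_mp[OF AE_not_in]) simp
  have "(\<integral>\<omega>. indicator A \<omega> * f \<omega> \<partial>M) = (\<integral>\<omega>. 0 \<partial>M)"
    apply (rule integral_cong_AE)
    using f A ae by auto
  then show ?thesis using True by simp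
next
  case False
  then show ?thesis by (simp add: cmean_def)
qed

lemma G:
  fixes N :: "'a \<Rightarrow> 'n::finite" and h :: "'n \<Rightarrow> real"
  assumes f: "integrable M f" and Nm: "N \<in> M \<rightarrow>\<^sub>M count_space UNIV"
  shows "integrable M (\<lambda>\<omega>. f \<omega> * h (N \<omega>))
    \<and> (\<integral>\<omega>. f \<omega> * h (N \<omega>) \<partial>M) = (\<Sum>n\<in>UNIV. h n * (\<integral>\<omega>. indicator (evN M N n) \<omega> * f \<omega> \<partial>M))"
proof -
  have E: "evN M N n \<in> sets M" for n
    unfolding evN_def by (rule measurable_sets[OF Nm]) simp
  have I: "integrable M (\<lambda>\<omega>. h n * (indicator (evN M N n) \<omega> * f \<omega>))" for n
    using integrable_real_mult_indicator[OF E f] by (simp add: mult.commute)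
  have eq: "f \<omega> * h (N \<omega>) = (\<Sum>n\<in>UNIV. h n * (indicator (evN M N n) \<omega> * f \<omega>))"
    if "\<omega> \<in> space M" for \<omega>
  proof -
    have "(\<Sum>n\<in>UNIV. h n * (indicator (evN M N n) \<omega> * f \<omega>)) =
          (\<Sum>n\<in>UNIV. if n = N \<omega> then h n * f \<omega> else 0)"
      by (rule sum.cong) (auto simp: evN_def indicator_def that)
    also have "\<dots> = h (N \<omega>) * f \<omega>" by simp
    finally show ?thesis by simp
  qed
  have int: "integrable M (\<lambda>\<omega>. \<Sum>n\<in>UNIV. h n * (indicator (evN M N n) \<omega> * f \<omega>))"
    using I by auto
  have 1: "integrable M (\<lambda>\<omega>. f \<omega> * h (N \<omega>))"
  proof -
    have "integrable M (\<lambda>\<omega>. f \<omega> * h (N \<omega>)) = integrable M (\<lambda>\<omega>. \<Sum>n\<in>UNIV. h n * (indicator (evN M N n) \<omega> * f \<omega>))"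
      using eq by (intro Bochner_Integration.integrable_cong) auto
    then show ?thesis using int by simp
  qed
  have "(\<integral>\<omega>. f \<omega> * h (N \<omega>) \<partial>M) = (\<integral>\<omega>. (\<Sum>n\<in>UNIV. h n * (indicator (evN M N n) \<omega> * f \<omega>)) \<partial>M)"
    using eq by (intro Bochner_Integration.integral_cong) auto
  also have "\<dots> = (\<Sum>n\<in>UNIV. h n * (\<integral>\<omega>. indicator (evN M N n) \<omega> * f \<omega> \<partial>M))"
    using I by (simp add: integral_sum)
  finally show ?thesis using 1 by simp
qed

lemma alg: "(s::real) \<noteq> 0 \<Longrightarrow> s * (u / s - v / s * (w / s)) = u - v * w / s"
  by (simp add: field_simps power2_eq_square)

theorem proposition1:
  fixes M :: "'a measure" and X Y :: "'a \<Rightarrow> real" and N :: "'a \<Rightarrow> 'n::finite"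
    and Ylo Yhi :: real
  assumes "prob_space M"
    and "X \<in> borel_measurable M"
    and "\<forall>\<omega>\<in>space M. X \<omega> \<in> {0, 1}"
    and "integrable M Y"
    and "N \<in> M \<rightarrow>\<^sub>M count_space UNIV"
    and "\<exists>n. measure M (evN M N n) > 0 \<and> 0 < cmean M X (evN M N n) \<and> cmean M X (evN M N n) < 1"
    and "Ylo \<le> Yhi"
    and "\<forall>x\<in>{0,1}. \<forall>n. measure M (evX M X x \<inter> evN M N n) > 0 \<longrightarrow>
            cmean M Y (evX M X x \<inter> evN M N n) \<in> {Ylo..Yhi}"
  shows "Dgap M X Y = (deltaB M X Y N + deltaW M X Y N) / ((1 - gammaAgg M X N) * var M X)
         \<and> 0 \<le> gammaAgg M X N \<and> gammaAgg M X N < 1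
         \<and> sgn (Dgap M X Y) = sgn (deltaB M X Y N + deltaW M X Y N)"
proof -
  interpret prob_space M by fact
  note Nm = assms(5)
  note [simp] = prob_space
  define E where "E n = evN M N n" for n
  define A where "A x = evX M X x" for x
  have hE: "E n \<in> sets M" for n
    unfolding E_def evN_def by (rule measurable_sets[OF Nm]) simp
  have hA: "A x \<in> sets M" for x
    unfolding A_def evX_def by (rule measurable_sets[OF assms(2)]) simp
  have X01: "X \<omega> = indicator (A 1) \<omega>" if "\<omega> \<in> space M" for \<omega>
    using assms(3) that by (auto simp: A_def evX_def indicator_def)
  have X00: "1 - X \<omega> = indicator (A 0) \<omega>" if "\<omega> \<in> space M" for \<omega>
    using assms(3) that by (auto simp: A_def evX_def indicator_def)
  have Xint: "integrable M X"
  proof (rule integrable_const_bound[where B=1])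
    show "AE x in M. norm (X x) \<le> 1" using assms(3) by (auto intro!: AE_I2)
  qed (rule assms(2))
  have oneint: "integrable M (\<lambda>_. 1::real)" by simp
  have YXint: "integrable M (\<lambda>\<omega>. Y \<omega> * X \<omega>)"
  proof -
    have "integrable M (\<lambda>\<omega>. Y \<omega> * X \<omega>) = integrable M (\<lambda>\<omega>. Y \<omega> * indicator (A 1) \<omega>)"
      using X01 by (intro Bochner_Integration.integrable_cong) auto
    then show ?thesis using integrable_real_mult_indicator[OF hA assms(4)] by simp
  qed
  define c where "c n = cmean M X (E n)" for n
  define p where "p n = measure M (E n)" for n
  define a where "a n = (\<integral>\<omega>. indicator (E n) \<omega> * X \<omega> \<partial>M)" for n
  define b where "b n = (\<integral>\<omega>. indicator (E n) \<omega> * Y \<omega> \<partial>M)" for n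
  define e where "e n = (\<integral>\<omega>. indicator (E n) \<omega> * (Y \<omega> * X \<omega>) \<partial>M)" for n
  have XNc: "XN M X N \<omega> = c (N \<omega>)" for \<omega> by (simp add: XN_def c_def E_def)
  have pa: "p n * c n = a n" for n unfolding p_def c_def a_def by (rule L1[OF assms(1) hE Xint])
  have pb: "p n * cmean M Y (E n) = b n" for n unfolding p_def b_def by (rule L1[OF assms(1) hE assms(4)])
  have pe: "p n * cmean M (\<lambda>\<omega>. Y \<omega> * X \<omega>) (E n) = e n" for n
    unfolding p_def e_def by (rule L1[OF assms(1) hE YXint])
  have Gs: "integrable M (\<lambda>\<omega>. f \<omega> * h (N \<omega>))
    \<and> (\<integral>\<omega>. f \<omega> * h (N \<omega>) \<partial>M) = (\<Sum>n\<in>UNIV. h n * (\<integral>\<omega>. indicator (E n) \<omega> * f \<omega> \<partial>M))"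
    if "integrable M f" for f and h :: "'n \<Rightarrow> real"
    using G[OF that Nm, of h] by (simp add: E_def)
  have ip: "(\<integral>\<omega>. indicator (E n) \<omega> * 1 \<partial>M) = p n" for n
    using hE[of n] sets.sets_into_space by (simp add: p_def Int_absorb2)
  have ip2: "prob (E n \<inter> space M) = p n" for n
    using hE[of n] sets.sets_into_space by (simp add: p_def Int_absorb2)
  have sp: "(\<Sum>n\<in>UNIV. p n) = 1"
    using Gs[OF oneint, of "\<lambda>_. 1"] by (simp add: ip ip2 prob_space)
  define SA where "SA = (\<Sum>n\<in>UNIV. a n)"
  define SB where "SB = (\<Sum>n\<in>UNIV. b n)"
  define SE where "SE = (\<Sum>n\<in>UNIV. e n)"
  define CA where "CA = (\<Sum>n\<in>UNIV. c n * a n)"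
  define CB where "CB = (\<Sum>n\<in>UNIV. c n * b n)"
  define CE where "CE = (\<Sum>n\<in>UNIV. c n * e n)"
  have EX: "(\<integral>\<omega>. X \<omega> \<partial>M) = SA"
    using Gs[OF Xint, of "\<lambda>_. 1"] by (simp add: SA_def a_def)
  have EXN: "(\<integral>\<omega>. XN M X N \<omega> \<partial>M) = SA"
  proof -
    have "(\<integral>\<omega>. XN M X N \<omega> \<partial>M) = (\<integral>\<omega>. 1 * c (N \<omega>) \<partial>M)" by (simp add: XNc)
    also have "\<dots> = (\<Sum>n\<in>UNIV. c n * p n)" using Gs[OF oneint, of c] by (simp add: ip ip2)
    also have "\<dots> = SA" unfolding SA_def using pa by (simp add: mult.commute)
    finally show ?thesis .
  qed
  define VXN where "VXN = (\<Sum>n\<in>UNIV. (c n - SA)\<^sup>2 * p n)"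
  have varXN: "var M (XN M X N) = VXN"
  proof -
    have "var M (XN M X N) = (\<integral>\<omega>. 1 * (\<lambda>n. (c n - SA)\<^sup>2) (N \<omega>) \<partial>M)"
      unfolding var_def EXN by (simp add: XNc)
    also have "\<dots> = VXN" using Gs[OF oneint, of "\<lambda>n. (c n - SA)\<^sup>2"] by (simp add: ip ip2 VXN_def)
    finally show ?thesis .
  qed
  have varX: "var M X = SA - SA\<^sup>2"
  proof -
    have "var M X = (\<integral>\<omega>. X \<omega> * (1 - 2 * SA) + SA\<^sup>2 \<partial>M)"
      unfolding var_def EX
    proof (intro Bochner_Integration.integral_cong refl)
      fix \<omega> assume "\<omega> \<in> space M"
      then have "X \<omega> = 0 \<or> X \<omega> = 1" using assms(3) by auto
      then show "(X \<omega> - SA)\<^sup>2 = X \<omega> * (1 - 2 * SA) + SA\<^sup>2"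
        by (auto simp: power2_eq_square algebra_simps)
    qed
    also have "\<dots> = SA * (1 - 2 * SA) + SA\<^sup>2"
      using Xint EX by simp
    finally show ?thesis by (simp add: power2_eq_square algebra_simps)
  qed
  have VXN_eq: "VXN = CA - SA\<^sup>2"
  proof -
    have "VXN = (\<Sum>n\<in>UNIV. c n * a n - 2 * SA * a n + SA\<^sup>2 * p n)"
      unfolding VXN_def
    proof (rule sum.cong[OF refl])
      fix n
      show "(c n - SA)\<^sup>2 * p n = c n * a n - 2 * SA * a n + SA\<^sup>2 * p n"
        using pa[of n, symmetric] by (simp add: power2_eq_square algebra_simps)
    qed
    also have "\<dots> = CA - 2 * SA * SA + SA\<^sup>2 * 1"
      by (simp add: sum.distrib sum_subtractf sum_distrib_left[symmetric] CA_def SA_def sp[symmetric])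
    finally show ?thesis by (simp add: power2_eq_square)
  qed
  have c01: "0 \<le> c n \<and> c n \<le> 1" for n
  proof -
    have i1: "integrable M (\<lambda>\<omega>. indicator (E n) \<omega> * X \<omega>)"
      using integrable_real_mult_indicator[OF hE Xint] by (simp add: mult.commute)
    have i2: "integrable M (\<lambda>\<omega>. indicator (E n) \<omega> * (1::real))"
      using integrable_real_mult_indicator[OF hE oneint] by (simp add: mult.commute)
    have "0 \<le> a n" unfolding a_def
      using assms(3) by (intro Bochner_Integration.integral_nonneg) (auto simp: indicator_def)
    moreover have "a n \<le> p n" unfolding a_def ip[symmetric]
      using assms(3) by (intro integral_mono[OF i1 i2]) (auto simp: indicator_def)
    moreover have "c n = a n / p n" unfolding c_def a_def p_def cmean_def by simp
    ultimately show ?thesis by (auto simp: divide_le_eq_1 intro: divide_nonneg_nonneg)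
  qed
  have p0: "0 \<le> p n" for n unfolding p_def by simp
  obtain n0 where n0: "p n0 > 0" "0 < c n0" "c n0 < 1"
    using assms(6) by (auto simp: p_def c_def E_def)
  define K where "K = SA - CA"
  have K_eq: "K = (\<Sum>n\<in>UNIV. p n * c n * (1 - c n))"
    unfolding K_def SA_def CA_def sum_subtractf[symmetric] using pa
    by (intro sum.cong) (auto simp: algebra_simps)
  have Kpos: "K > 0" unfolding K_eq
    using n0 c01 p0 by (intro sum_pos2[where i=n0]) auto
  have CA0: "CA \<ge> 0" unfolding CA_def using pa c01 p0
    by (intro sum_nonneg) (metis mult_nonneg_nonneg)
  have SApos: "SA > 0" using Kpos CA0 K_def by simp
  have SA1: "1 - SA = (\<Sum>n\<in>UNIV. p n * (1 - c n))"
  proof -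
    have "1 - SA = (\<Sum>n\<in>UNIV. p n) - (\<Sum>n\<in>UNIV. a n)" using sp SA_def by simp
    also have "\<dots> = (\<Sum>n\<in>UNIV. p n * (1 - c n))"
      unfolding sum_subtractf[symmetric] using pa by (intro sum.cong) (auto simp: algebra_simps)
    finally show ?thesis .
  qed
  have SA1pos: "1 - SA > 0" unfolding SA1
    using n0 c01 p0 by (intro sum_pos2[where i=n0]) auto
  have mA1: "measure M (A 1) = SA"
  proof -
    have "measure M (A 1) = (\<integral>\<omega>. indicator (A 1) \<omega> \<partial>M)"
      using hA[of 1] sets.sets_into_space by (simp add: Int_absorb2)
    also have "\<dots> = (\<integral>\<omega>. X \<omega> \<partial>M)" using X01 by (intro Bochner_Integration.integral_cong) auto
    finally show ?thesis using EX by simp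
  qed
  have mA0: "measure M (A 0) = 1 - SA"
  proof -
    have "measure M (A 0) = (\<integral>\<omega>. indicator (A 0) \<omega> \<partial>M)"
      using hA[of 0] sets.sets_into_space by (simp add: Int_absorb2)
    also have "\<dots> = (\<integral>\<omega>. 1 - X \<omega> \<partial>M)" using X00 by (intro Bochner_Integration.integral_cong) auto
    also have "\<dots> = 1 - SA" using Xint EX by simp
    finally show ?thesis .
  qed
  have GYX: "integrable M (\<lambda>\<omega>. (Y \<omega> * X \<omega>) * h (N \<omega>))
     \<and> (\<integral>\<omega>. (Y \<omega> * X \<omega>) * h (N \<omega>) \<partial>M) = (\<Sum>n\<in>UNIV. h n * e n)" for h
    using Gs[OF YXint, of h] by (simp add: e_def)
  have GY: "integrable M (\<lambda>\<omega>. Y \<omega> * h (N \<omega>))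
     \<and> (\<integral>\<omega>. Y \<omega> * h (N \<omega>) \<partial>M) = (\<Sum>n\<in>UNIV. h n * b n)" for h
    using Gs[OF assms(4), of h] by (simp add: b_def)
  have GX: "integrable M (\<lambda>\<omega>. X \<omega> * h (N \<omega>))
     \<and> (\<integral>\<omega>. X \<omega> * h (N \<omega>) \<partial>M) = (\<Sum>n\<in>UNIV. h n * a n)" for h
    using Gs[OF Xint, of h] by (simp add: a_def)
  have G1: "integrable M (\<lambda>\<omega>. 1 * h (N \<omega>))
     \<and> (\<integral>\<omega>. 1 * h (N \<omega>) \<partial>M) = (\<Sum>n\<in>UNIV. h n * p n)" for h
    using Gs[OF oneint, of h] by (simp add: ip ip2)
  have I1: "(\<integral>\<omega>. indicator (A 1) \<omega> * (Y \<omega> * XN M X N \<omega>) \<partial>M) = CE"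
  proof -
    have "(\<integral>\<omega>. indicator (A 1) \<omega> * (Y \<omega> * XN M X N \<omega>) \<partial>M) = (\<integral>\<omega>. (Y \<omega> * X \<omega>) * c (N \<omega>) \<partial>M)"
      using X01 by (intro Bochner_Integration.integral_cong) (auto simp: XNc)
    then show ?thesis using GYX[of c] by (simp add: CE_def)
  qed
  have I2: "(\<integral>\<omega>. indicator (A 1) \<omega> * Y \<omega> \<partial>M) = SE"
  proof -
    have "(\<integral>\<omega>. indicator (A 1) \<omega> * Y \<omega> \<partial>M) = (\<integral>\<omega>. (Y \<omega> * X \<omega>) * (\<lambda>_. 1) (N \<omega>) \<partial>M)"
      using X01 by (intro Bochner_Integration.integral_cong) auto
    then show ?thesis using GYX[of "\<lambda>_. 1"] by (simp add: SE_def)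
  qed
  have I3: "(\<integral>\<omega>. indicator (A 1) \<omega> * XN M X N \<omega> \<partial>M) = CA"
  proof -
    have "(\<integral>\<omega>. indicator (A 1) \<omega> * XN M X N \<omega> \<partial>M) = (\<integral>\<omega>. X \<omega> * c (N \<omega>) \<partial>M)"
      using X01 by (intro Bochner_Integration.integral_cong) (auto simp: XNc)
    then show ?thesis using GX[of c] by (simp add: CA_def)
  qed
  have J1: "(\<integral>\<omega>. indicator (A 0) \<omega> * (Y \<omega> * XN M X N \<omega>) \<partial>M) = CB - CE"
  proof -
    have "(\<integral>\<omega>. indicator (A 0) \<omega> * (Y \<omega> * XN M X N \<omega>) \<partial>M)
        = (\<integral>\<omega>. Y \<omega> * c (N \<omega>) - (Y \<omega> * X \<omega>) * c (N \<omega>) \<partial>M)"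
      using X00 by (intro Bochner_Integration.integral_cong) (auto simp: XNc algebra_simps simp flip: X00)
    also have "\<dots> = CB - CE" using GY[of c] GYX[of c] by (simp add: CB_def CE_def)
    finally show ?thesis .
  qed
  have J2: "(\<integral>\<omega>. indicator (A 0) \<omega> * Y \<omega> \<partial>M) = SB - SE"
  proof -
    have "(\<integral>\<omega>. indicator (A 0) \<omega> * Y \<omega> \<partial>M)
        = (\<integral>\<omega>. Y \<omega> * (\<lambda>_. 1) (N \<omega>) - (Y \<omega> * X \<omega>) * (\<lambda>_. 1) (N \<omega>) \<partial>M)"
      using X00 by (intro Bochner_Integration.integral_cong) (auto simp: algebra_simps simp flip: X00)
    also have "\<dots> = SB - SE" using GY[of "\<lambda>_. 1"] GYX[of "\<lambda>_. 1"] by (simp add: SB_def SE_def)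
    finally show ?thesis .
  qed
  have J3: "(\<integral>\<omega>. indicator (A 0) \<omega> * XN M X N \<omega> \<partial>M) = SA - CA"
  proof -
    have "(\<integral>\<omega>. indicator (A 0) \<omega> * XN M X N \<omega> \<partial>M)
        = (\<integral>\<omega>. 1 * c (N \<omega>) - X \<omega> * c (N \<omega>) \<partial>M)"
      using X00 by (intro Bochner_Integration.integral_cong) (auto simp: XNc algebra_simps simp flip: X00)
    also have "\<dots> = (\<Sum>n\<in>UNIV. c n * p n) - CA" using G1[of c] GX[of c] by (simp add: CA_def)
    also have "(\<Sum>n\<in>UNIV. c n * p n) = SA" unfolding SA_def using pa by (simp add: mult.commute)
    finally show ?thesis .
  qed
  have YXNint: "integrable M (\<lambda>\<omega>. Y \<omega> * XN M X N \<omega>)" using GY[of c] by (simp add: XNc)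
  have XNf: "XN M X N = (\<lambda>\<omega>. c (N \<omega>))" using XNc by auto
  have XNint: "integrable M (XN M X N)" using G1[of c] by (simp add: XNf)
  note L1A = L1[OF assms(1) hA]
  have c1a: "cmean M (\<lambda>\<omega>. Y \<omega> * XN M X N \<omega>) (A 1) = CE / SA"
    using L1A[OF YXNint, of 1] I1 mA1 SApos by (simp add: field_simps)
  have c1b: "cmean M Y (A 1) = SE / SA"
    using L1A[OF assms(4), of 1] I2 mA1 SApos by (simp add: field_simps)
  have c1c: "cmean M (XN M X N) (A 1) = CA / SA"
    using L1A[OF XNint, of 1] I3 mA1 SApos by (simp add: field_simps)
  have c0a: "cmean M (\<lambda>\<omega>. Y \<omega> * XN M X N \<omega>) (A 0) = (CB - CE) / (1 - SA)"
    using L1A[OF YXNint, of 0] J1 mA0 SA1pos by (simp add: field_simps)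
  have c0b: "cmean M Y (A 0) = (SB - SE) / (1 - SA)"
    using L1A[OF assms(4), of 0] J2 mA0 SA1pos by (simp add: field_simps)
  have c0c: "cmean M (XN M X N) (A 0) = (SA - CA) / (1 - SA)"
    using L1A[OF XNint, of 0] J3 mA0 SA1pos by (simp add: field_simps)
  have dB: "deltaB M X Y N = SE - CB"
  proof -
    have "deltaB M X Y N = (\<Sum>n\<in>UNIV. e n - b n * c n)"
      unfolding deltaB_def
    proof (rule sum.cong[OF refl])
      fix n
      show "measure M (evN M N n) * (cmean M (\<lambda>\<omega>. Y \<omega> * X \<omega>) (evN M N n) - cmean M Y (evN M N n) * cmean M X (evN M N n))
          = e n - b n * c n"
        using pe[of n] pb[of n] by (simp add: p_def c_def E_def right_diff_distrib mult.assoc[symmetric])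
    qed
    then show ?thesis by (simp add: sum_subtractf SE_def CB_def mult.commute)
  qed
  have dW: "deltaW M X Y N = SA * (CE / SA - SE / SA * (CA / SA))
      + (1 - SA) * ((CB - CE) / (1 - SA) - (SB - SE) / (1 - SA) * ((SA - CA) / (1 - SA)))"
    unfolding deltaW_def using c1a c1b c1c c0a c0b c0c mA1 mA0 by (simp add: A_def)
  have Dg: "Dgap M X Y = SE / SA - (SB - SE) / (1 - SA)"
    unfolding Dgap_def using c1b c0b by (simp add: A_def)
  have gam: "gammaAgg M X N = VXN / (SA - SA\<^sup>2)"
    unfolding gammaAgg_def varXN varX ..
  have V: "SA - SA\<^sup>2 > 0" using SApos SA1pos
    by (simp add: power2_eq_square)
  have KV: "(1 - gammaAgg M X N) * var M X = K"
    unfolding gam varX using V by (simp add: field_simps VXN_eq K_def)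
  have T: "deltaB M X Y N + deltaW M X Y N = K * Dgap M X Y"
  proof -
    have SA0: "SA \<noteq> 0" "1 - SA \<noteq> 0" using SApos SA1pos by auto
    have w: "deltaW M X Y N = CB - SE * CA / SA - (SB - SE) * (SA - CA) / (1 - SA)"
      unfolding dW alg[OF SA0(1)] alg[OF SA0(2)] by simp
    have "SE - CB + (CB - SE * CA / SA - (SB - SE) * (SA - CA) / (1 - SA))
        = (SA - CA) * (SE / SA - (SB - SE) / (1 - SA))"
      using SA0 by (simp add: field_simps)
    then show ?thesis unfolding dB w Dg K_def by simp
  qed
  have g0: "0 \<le> gammaAgg M X N" unfolding gam VXN_def using V p0
    by (intro divide_nonneg_pos sum_nonneg) auto
  have g1: "gammaAgg M X N < 1" unfolding gam using V Kpos
    by (simp add: VXN_eq K_def)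
  show ?thesis
    using T KV Kpos g0 g1 by (simp add: sgn_mult)
qed
end
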